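(* Let $\alpha\in(1,2)$ be irrational. Then $\alpha$ has a purely periodic Lehner expansion if and only if $\alpha$ is a quadratic irrational whose Galois conjugate $\bar\alpha$ satisfies $\bar\alpha<1$. Furthermore, if $\alpha=[\![\overline{(a_0,\epsilon_0)(a_1,\epsilon_1)\cdots(a_{r-1},\epsilon_{r-1})}]\!]$, then $\bar\alpha=-\langle\!\langle\overline{(\epsilon_{r-1}/a_{r-1})\cdots(\epsilon_0/a_0)}\rangle\!\rangle$.
   Context: The Lehner map on $[1,2)$ is $L(x)=\frac{1}{2-x}$ for $x\in[1,3/2)$ and $L(x)=\frac{1}{x-1}$ for $x\in[3/2,2)$. For irrational $x\in(1,2)$, its Lehner digits are $(a_i,\epsilon_i)=(2,-1)$ if $L^i(x)\in[1,3/2)$ and $(a_i,\epsilon_i)=(1,+1)$ if $L^i(x)\in[3/2,2)$, and $x=a_0+\cfrac{\epsilon_0}{a_1+\cfrac{\epsilon_1}{a_2+\cdots}}$, written $[\![(a_0,\epsilon_0)(a_1,\epsilon_1)\cdots]\!]$ (the Lehner expansion). For digits $(f_i/b_i)\in\{(-1/2),(+1/1)\}$, $\langle\!\langle(f_0/b_0)(f_1/b_1)\cdots\rangle\!\rangle$ denotes the value of $\cfrac{f_0}{b_0+\cfrac{f_1}{b_1+\cdots}}$; a Lehner digit $(a,\epsilon)$ corresponds to the Farey-type digit $(\epsilon/a)$. An overline denotes infinite periodic repetition of the block; "purely periodic" means the digit sequence is periodic from index $0$. *)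

theory Defs
  imports Complex_Main
begin

definition lehner_map :: "real \<Rightarrow> real" where
  "lehner_map x = (if x < 3/2 then 1 / (2 - x) else 1 / (x - 1))"

text \<open>The i-th Lehner digit (a_i, epsilon_i) of x.\<close>
definition lehner_digit :: "real \<Rightarrow> nat \<Rightarrow> int \<times> int" where
  "lehner_digit x i = (if (lehner_map ^^ i) x < 3/2 then (2, -1) else (1, 1))"

definition lehner_purely_periodic :: "real \<Rightarrow> bool" where
  "lehner_purely_periodic x \<longleftrightarrow>
     (\<exists>r>0. \<forall>i. lehner_digit x (i + r) = lehner_digit x i)"

fun farey_cf_fin :: "(int \<times> int) list \<Rightarrow> real" where
  "farey_cf_fin [] = 0"
| "farey_cf_fin ((f, b) # ds) = of_int f / (of_int b + farey_cf_fin ds)"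

definition farey_cf_has_value :: "(nat \<Rightarrow> int \<times> int) \<Rightarrow> real \<Rightarrow> bool" where
  "farey_cf_has_value d v \<longleftrightarrow> (\<lambda>n. farey_cf_fin (map d [0..<n])) \<longlonglongrightarrow> v"

definition quadratic_irrational :: "real \<Rightarrow> bool" where
  "quadratic_irrational x \<longleftrightarrow> x \<notin> \<rat> \<and>
     (\<exists>a b c :: int. a \<noteq> 0 \<and> of_int a * x^2 + of_int b * x + of_int c = 0)"

text \<open>Galois conjugate of a quadratic irrational: the other root of its (essentially
  unique) integer quadratic polynomial.\<close>
definition galois_conj :: "real \<Rightarrow> real" where
  "galois_conj x = (THE y. \<exists>a b c :: int. a \<noteq> 0 \<and>
       of_int a * x^2 + of_int b * x + of_int c = 0 \<and> y = - of_int b / of_int a - x)"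

end

theory Submission
  imports Defs "HOL-Library.Quadratic_Discriminant"
begin


definition kf :: "int \<times> int \<Rightarrow> real \<Rightarrow> real" where
  "kf fb z = of_int (fst fb) / (of_int (snd fb) + z)"

fun G :: "(int \<times> int) list \<Rightarrow> real \<Rightarrow> real" where
  "G [] z = z"
| "G (x # xs) z = kf x (G xs z)"

lemma farey_G: "farey_cf_fin ds = G ds 0"
  by (induction ds rule: farey_cf_fin.induct) (auto simp: kf_def)

lemma G_append: "G (xs @ ys) z = G xs (G ys z)"
  by (induction xs) auto

definition vd :: "int \<times> int \<Rightarrow> bool" where
  "vd fb \<longleftrightarrow> fb = (1,1) \<or> fb = (-1,2)"

definition gstep :: "int \<times> int \<times> int \<times> int \<Rightarrow> int \<times> int \<Rightarrow> int \<times> int \<times> int \<times> int" where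
  "gstep M fb = (case M of (A,B,C,D) \<Rightarrow> (B, A * fst fb + B * snd fb, D, C * fst fb + D * snd fb))"

definition gm :: "(int \<times> int) list \<Rightarrow> int \<times> int \<times> int \<times> int" where
  "gm xs = foldl gstep (1,0,0,1) xs"

lemma gm_Nil[simp]: "gm [] = (1,0,0,1)" by (simp add: gm_def)
lemma gm_snoc[simp]: "gm (xs @ [x]) = gstep (gm xs) x" by (simp add: gm_def)

definition ginv :: "int \<times> int \<times> int \<times> int \<Rightarrow> bool" where
  "ginv M = (case M of (A,B,C,D) \<Rightarrow> 0 \<le> C \<and> C \<le> D \<and> 1 \<le> D \<and> 1 \<le> C + A \<and> C + A \<le> D + B
      \<and> \<bar>A * D - B * C\<bar> = 1)"

lemma ginv_step: assumes "ginv M" "vd x" shows "ginv (gstep M x)"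
proof -
  obtain A B C D where M: "M = (A,B,C,D)" by (cases M) auto
  have d1: "\<bar>B * (C * f + D * b) - (A * f + B * b) * D\<bar> = \<bar>A * D - B * C\<bar>" if "f = 1 \<or> f = -1" for f b :: int
  proof -
    have "B * (C * f + D * b) - (A * f + B * b) * D = - f * (A * D - B * C)" by (simp add: algebra_simps)
    thus ?thesis using that by (auto simp: abs_mult)
  qed
  show ?thesis using assms d1[of "fst x" "snd x"] unfolding M ginv_def gstep_def vd_def by auto
qed

lemma ginv_gm: "(\<forall>x\<in>set xs. vd x) \<Longrightarrow> ginv (gm xs)"
proof (induction xs rule: rev_induct)
  case Nil then show ?case by (simp add: ginv_def)
next
  case (snoc x xs) then show ?case by (simp add: ginv_step)
qed

lemma gm_C_pos: "xs \<noteq> [] \<Longrightarrow> (\<forall>x\<in>set xs. vd x) \<Longrightarrow> gm xs = (A,B,C,D) \<Longrightarrow> C \<ge> 1"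
proof (induction xs arbitrary: A B C D rule: rev_induct)
  case Nil then show ?case by simp
next
  case (snoc x xs)
  have "ginv (gm xs)" using snoc.prems by (intro ginv_gm) auto
  then show ?case using snoc.prems(3) by (cases "gm xs") (auto simp: ginv_def gstep_def)
qed

lemma kf_gt: assumes "vd x" "z > -1" shows "kf x z > -1"
proof -
  have "1 / (1 + z) > (0::real)" using assms(2) by simp
  then have "1 / (1 + z) > (-1::real)" by linarith
  moreover have "-1 / (2 + z) > (-1::real)" using assms(2) by (simp add: field_simps)
  ultimately show ?thesis using assms(1) by (auto simp: vd_def kf_def)
qed

lemma G_gt: "(\<forall>x\<in>set xs. vd x) \<Longrightarrow> z > -1 \<Longrightarrow> G xs z > -1"
  by (induction xs) (auto simp: kf_gt)

lemma G_formula: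
  assumes "\<forall>x\<in>set xs. vd x" "z > -1" "gm xs = (A,B,C,D)"
  shows "of_int C * z + of_int D > 0 \<and> G xs z = (of_int A * z + of_int B) / (of_int C * z + of_int D)"
  using assms
proof (induction xs arbitrary: A B C D z rule: rev_induct)
  case Nil then show ?case by simp
next
  case (snoc x xs)
  obtain A0 B0 C0 D0 where g0: "gm xs = (A0,B0,C0,D0)" by (cases "gm xs") auto
  obtain f b where x: "x = (f,b)" by (cases x) auto
  have vx: "vd x" and vxs: "\<forall>x\<in>set xs. vd x" using snoc.prems by auto
  have inv0: "ginv (A0,B0,C0,D0)" using ginv_gm[OF vxs] g0 by simp
  define z' where "z' = kf x z"
  have bz: "of_int b + z > 0" using vx snoc.prems(2) by (auto simp: x vd_def)
  have z'gt: "z' > -1" using kf_gt[OF vx snoc.prems(2)] by (simp add: z'_def)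
  have IH: "of_int C0 * z' + of_int D0 > 0 \<and> G xs z' = (of_int A0 * z' + of_int B0) / (of_int C0 * z' + of_int D0)"
    using snoc.IH[OF vxs z'gt g0] .
  have new: "A = B0" "B = A0 * f + B0 * b" "C = D0" "D = C0 * f + D0 * b"
    using snoc.prems(3) g0 by (auto simp: x gstep_def)
  have z'def: "z' = of_int f / (of_int b + z)" by (simp add: z'_def kf_def x)
  have den: "of_int C * z + of_int D = (of_int b + z) * (of_int C0 * z' + of_int D0)"
    using bz by (simp add: new z'def field_simps)
  have num: "of_int A * z + of_int B = (of_int b + z) * (of_int A0 * z' + of_int B0)"
    using bz by (simp add: new z'def field_simps)
  have pos: "of_int C * z + of_int D > 0" using den IH bz by simp
  have "G (xs @ [x]) z = G xs z'" by (simp add: G_append z'_def)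
  also have "\<dots> = (of_int A * z + of_int B) / (of_int C * z + of_int D)"
    using IH bz by (simp add: den num)
  finally show ?case using pos by simp
qed



definition orb :: "real \<Rightarrow> nat \<Rightarrow> real" where
  "orb a n = (lehner_map ^^ n) a"

lemma orb_0[simp]: "orb a 0 = a" by (simp add: orb_def)
lemma orb_Suc: "orb a (Suc n) = lehner_map (orb a n)" by (simp add: orb_def)

lemma lehner_digit_orb: "lehner_digit a i = (if orb a i < 3/2 then (2,-1) else (1,1))"
  by (simp add: lehner_digit_def orb_def)

lemma L_in:
  assumes "1 < x" "x < 2" "x \<notin> \<rat>"
  shows "1 < lehner_map x \<and> lehner_map x < 2 \<and> lehner_map x \<notin> \<rat>"
proof (cases "x < 3/2")
  case True
  have L: "lehner_map x = 1 / (2 - x)" using True by (simp add: lehner_map_def)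
  have "1 < 1 / (2 - x)" using assms True by (simp add: field_simps)
  moreover have "1 / (2 - x) < 2" using assms True by (simp add: field_simps)
  moreover have "1 / (2 - x) \<notin> \<rat>"
  proof
    assume "1 / (2 - x) \<in> \<rat>"
    then have "1 / (1 / (2 - x)) \<in> \<rat>" using Rats_divide Rats_1 by blast
    then have "2 - x \<in> \<rat>" by simp
    then have "2 - (2 - x) \<in> \<rat>" using Rats_diff Rats_number_of by blast
    then show False using assms by simp
  qed
  ultimately show ?thesis using L by simp
next
  case False
  have L: "lehner_map x = 1 / (x - 1)" using False by (simp add: lehner_map_def)
  have "x \<noteq> 3/2" using assms(3) by (metis Rats_number_of Rats_divide Rats_1 Rats_add one_add_one)
  then have x32: "x > 3/2" using False by simp
  have "1 < 1 / (x - 1)" using assms x32 by (simp add: field_simps)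
  moreover have "1 / (x - 1) < 2" using assms x32 by (simp add: field_simps)
  moreover have "1 / (x - 1) \<notin> \<rat>"
  proof
    assume "1 / (x - 1) \<in> \<rat>"
    then have "1 / (1 / (x - 1)) \<in> \<rat>" using Rats_divide Rats_1 by blast
    then have "x - 1 \<in> \<rat>" by simp
    then have "(x - 1) + 1 \<in> \<rat>" using Rats_add Rats_1 by blast
    then show False using assms by simp
  qed
  ultimately show ?thesis using L by simp
qed

lemma orb_in:
  assumes "1 < a" "a < 2" "a \<notin> \<rat>"
  shows "1 < orb a n \<and> orb a n < 2 \<and> orb a n \<notin> \<rat>"
  by (induction n) (use assms L_in in \<open>auto simp: orb_Suc\<close>)

lemma L_rel:
  assumes "1 < x" "x < 2"
  shows "x = of_int (fst (if x < 3/2 then (2::int,-1::int) else (1,1)))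
           + of_int (snd (if x < 3/2 then (2::int,-1::int) else (1,1))) / lehner_map x"
  using assms by (auto simp: lehner_map_def field_simps)

lemma L_eq:
  shows "lehner_map x = of_int (snd (if x < 3/2 then (2::int,-1::int) else (1,1)))
           / (x - of_int (fst (if x < 3/2 then (2::int,-1::int) else (1,1))))"
  by (auto simp: lehner_map_def field_simps)

definition fd :: "real \<Rightarrow> nat \<Rightarrow> int \<times> int" where
  "fd a j = (snd (lehner_digit a j), fst (lehner_digit a j))"

lemma vd_fd: "vd (fd a j)" by (auto simp: fd_def lehner_digit_def vd_def)

lemma orb_rel:
  assumes "1 < a" "a < 2" "a \<notin> \<rat>"
  shows "orb a i = of_int (fst (lehner_digit a i)) + of_int (snd (lehner_digit a i)) / orb a (Suc i)"
  using L_rel[of "orb a i"] orb_in[OF assms, of i] by (simp add: orb_Suc lehner_digit_orb)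

lemma fwd:
  assumes "1 < a" "a < 2" "a \<notin> \<rat>"
  shows "gm (rev (map (fd a) [i..<i+n])) = (A,B,C,D) \<Longrightarrow>
    orb a i = (of_int D * orb a (i+n) + of_int B) / (of_int C * orb a (i+n) + of_int A)"
proof (induction n arbitrary: i A B C D)
  case 0 then show ?case by simp
next
  case (Suc n)
  obtain A0 B0 C0 D0 where g0: "gm (rev (map (fd a) [Suc i..<Suc i+n])) = (A0,B0,C0,D0)"
    by (cases "gm (rev (map (fd a) [Suc i..<Suc i+n]))") auto
  have ups: "[i..<i + Suc n] = i # [Suc i..<Suc i + n]" by (simp add: upt_conv_Cons)
  have "gm (rev (map (fd a) [i..<i + Suc n])) = gstep (A0,B0,C0,D0) (fd a i)"
    by (simp only: ups list.map rev.simps gm_snoc) (simp only: g0)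
  then have new: "A = B0" "B = A0 * fst (fd a i) + B0 * snd (fd a i)" "C = D0"
    "D = C0 * fst (fd a i) + D0 * snd (fd a i)"
    using Suc.prems by (auto simp: gstep_def)
  have inv: "ginv (A0,B0,C0,D0)" using ginv_gm[of "rev (map (fd a) [Suc i..<Suc i+n])"] g0
    by (auto simp: vd_fd)
  define z where "z = orb a (i + Suc n)"
  have z1: "z > 1" using orb_in[OF assms] by (simp add: z_def)
  have IH: "orb a (Suc i) = (of_int D0 * z + of_int B0) / (of_int C0 * z + of_int A0)"
    using Suc.IH[OF g0] by (simp add: z_def)
  have "of_int C0 * z \<ge> of_int C0 * (1::real)" using inv z1 by (intro mult_left_mono) (auto simp: ginv_def)
  then have den0: "of_int C0 * z + of_int A0 \<ge> (1::real)" using inv by (auto simp: ginv_def)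
  have y1: "orb a (Suc i) > 1" using orb_in[OF assms] by simp
  have num0: "of_int D0 * z + of_int B0 > (0::real)"
  proof -
    have "of_int D0 * z + of_int B0 = orb a (Suc i) * (of_int C0 * z + of_int A0)"
      using IH den0 by simp
    also have "\<dots> > 0" using y1 den0 by simp
    finally show ?thesis .
  qed
  have "orb a i = of_int (fst (lehner_digit a i)) + of_int (snd (lehner_digit a i)) / orb a (Suc i)"
    by (rule orb_rel[OF assms])
  also have "\<dots> = (of_int D * z + of_int B) / (of_int C * z + of_int A)"
    using den0 num0 by (simp add: IH new fd_def field_simps)
  finally show ?case by (simp add: z_def)
qed



lemma conj_eq:
  fixes a b c :: int
  assumes "x \<notin> \<rat>" "a \<noteq> 0" "of_int a * x^2 + of_int b * x + of_int c = 0"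
  shows "galois_conj x = - of_int b / of_int a - x"
  unfolding galois_conj_def
proof (rule the_equality)
  show "\<exists>a' b' c' :: int. a' \<noteq> 0 \<and> of_int a' * x^2 + of_int b' * x + of_int c' = 0 \<and>
      - of_int b / of_int a - x = - of_int b' / of_int a' - x"
    using assms by blast
next
  fix y assume "\<exists>a' b' c' :: int. a' \<noteq> 0 \<and> of_int a' * x^2 + of_int b' * x + of_int c' = 0 \<and>
      y = - of_int b' / of_int a' - x"
  then obtain a' b' c' :: int where h: "a' \<noteq> 0" "of_int a' * x^2 + of_int b' * x + of_int c' = 0"
    "y = - of_int b' / of_int a' - x" by blast
  have lin: "of_int (a' * b - a * b') * x + of_int (a' * c - a * c') = (0::real)"
  proof -
    have "of_int (a' * b - a * b') * x + of_int (a' * c - a * c') =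
      of_int a' * (of_int a * x^2 + of_int b * x + of_int c) - of_int a * (of_int a' * x^2 + of_int b' * x + of_int c')"
      by (simp add: algebra_simps power2_eq_square)
    then show ?thesis using assms(3) h(2) by simp
  qed
  have "a' * b - a * b' = 0"
  proof (rule ccontr)
    assume ne: "a' * b - a * b' \<noteq> 0"
    define k where "k = (of_int (a' * b - a * b') :: real)"
    define m where "m = (of_int (a' * c - a * c') :: real)"
    have k0: "k \<noteq> 0" unfolding k_def using ne by (metis of_int_eq_0_iff)
    have "k * x + m = 0" using lin by (simp add: k_def m_def)
    then have "x = - m / k" using k0 by (simp add: field_simps)
    then have "x = - of_int (a' * c - a * c') / of_int (a' * b - a * b')" by (simp add: k_def m_def)
    then have "x \<in> \<rat>" by simp
    then show False using assms(1) by simp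
  qed
  then have "of_int b' / of_int a' = (of_int b / of_int a :: real)"
    using h(1) assms(2) by (simp add: field_simps flip: of_int_mult)
  then show "y = - of_int b / of_int a - x" using h(3) by simp
qed

lemma step_aux:
  fixes p q d :: real
  assumes "0 < p" "p \<le> 1" "0 < q" "q \<le> 1" "\<bar>p - q\<bar> = d"
  shows "d + d^2 \<le> d / (p * q)"
proof -
  have pq: "p * q \<le> 1 - d"
  proof (cases "p \<le> q")
    case True
    then have "p * q \<le> p" using assms by (simp add: mult_left_le)
    then show ?thesis using assms True by linarith
  next
    case False
    then have "p * q \<le> q" using assms by (simp add: mult_right_le_one_le)
    then show ?thesis using assms False by linarith
  qed
  have pq0: "p * q > 0" using assms by simp
  have d0: "d \<ge> 0" using assms by auto
  have "(d + d^2) * (p * q) \<le> (d + d^2) * (1 - d)" using pq d0 by (intro mult_left_mono) auto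
  also have "\<dots> \<le> d" using d0 by (simp add: algebra_simps power2_eq_square)
  finally show ?thesis using pq0 by (simp add: field_simps)
qed

lemma L_expand:
  assumes "1 < u" "u < 2" "1 < v" "v < 2" "u \<notin> \<rat>" "v \<notin> \<rat>" "(u < 3/2) = (v < 3/2)"
  shows "\<bar>u - v\<bar> + \<bar>u - v\<bar>^2 \<le> \<bar>lehner_map u - lehner_map v\<bar>"
proof (cases "u < 3/2")
  case True
  then have vt: "v < 3/2" using assms by simp
  have "lehner_map u - lehner_map v = (u - v) / ((2 - u) * (2 - v))"
    using True vt assms by (simp add: lehner_map_def field_simps)
  then have "\<bar>lehner_map u - lehner_map v\<bar> = \<bar>u - v\<bar> / ((2 - u) * (2 - v))"
    using assms by (simp add: abs_divide abs_mult)
  moreover have "\<bar>u - v\<bar> + \<bar>u - v\<bar>^2 \<le> \<bar>u - v\<bar> / ((2 - u) * (2 - v))"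
    using assms by (intro step_aux) auto
  ultimately show ?thesis by simp
next
  case False
  then have vt: "\<not> v < 3/2" using assms by simp
  have "lehner_map u - lehner_map v = (v - u) / ((u - 1) * (v - 1))"
    using False vt assms by (simp add: lehner_map_def field_simps)
  then have "\<bar>lehner_map u - lehner_map v\<bar> = \<bar>u - v\<bar> / ((u - 1) * (v - 1))"
    using assms by (simp add: abs_divide abs_mult abs_minus_commute)
  moreover have "\<bar>u - v\<bar> + \<bar>u - v\<bar>^2 \<le> \<bar>u - v\<bar> / ((u - 1) * (v - 1))"
    using assms by (intro step_aux) auto
  ultimately show ?thesis by simp
qed

lemma inj_digits:
  assumes "1 < x" "x < 2" "x \<notin> \<rat>" "1 < y" "y < 2" "y \<notin> \<rat>"
    and same: "\<forall>i. lehner_digit x i = lehner_digit y i"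
  shows "x = y"
proof (rule ccontr)
  assume ne: "x \<noteq> y"
  define \<delta> where "\<delta> = \<bar>x - y\<bar>"
  have d0: "\<delta> > 0" using ne by (simp add: \<delta>_def)
  have side: "(orb x n < 3/2) = (orb y n < 3/2)" for n
  proof -
    have "lehner_digit x n = lehner_digit y n" using same by simp
    then show ?thesis by (auto simp: lehner_digit_orb split: if_splits)
  qed
  have grow: "\<bar>orb x n - orb y n\<bar> \<ge> \<delta> + of_nat n * \<delta>^2" for n
  proof (induction n)
    case 0 then show ?case by (simp add: \<delta>_def)
  next
    case (Suc n)
    have ex: "\<bar>orb x n - orb y n\<bar> + \<bar>orb x n - orb y n\<bar>^2 \<le> \<bar>orb x (Suc n) - orb y (Suc n)\<bar>"
      unfolding orb_Suc using orb_in[OF assms(1-3)] orb_in[OF assms(4-6)] side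
      by (intro L_expand) auto
    have nn: "0 \<le> of_nat n * \<delta>^2" by simp
    have dl: "\<delta> \<le> \<bar>orb x n - orb y n\<bar>" using Suc.IH nn by linarith
    have sq: "\<delta>^2 \<le> \<bar>orb x n - orb y n\<bar>^2"
      using dl d0 by (intro power_mono) auto
    have sn: "of_nat (Suc n) * \<delta>^2 = of_nat n * \<delta>^2 + \<delta>^2" by (simp add: algebra_simps)
    show ?case using ex sq Suc.IH sn by linarith
  qed
  obtain n :: nat where n: "1 / \<delta>^2 < of_nat n" using reals_Archimedean2 by blast
  then have "1 < of_nat n * \<delta>^2" using d0 by (simp add: field_simps)
  moreover have "\<bar>orb x n - orb y n\<bar> < 1" using orb_in[OF assms(1-3), of n] orb_in[OF assms(4-6), of n] by (simp add: abs_less_iff)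
  ultimately show False using grow[of n] d0 by linarith
qed

lemma partA:
  assumes a: "1 < \<alpha>" "\<alpha> < 2" "\<alpha> \<notin> \<rat>" and r: "r > 0"
    and per: "\<forall>i. lehner_digit \<alpha> (i + r) = lehner_digit \<alpha> i"
    and g: "gm (rev (map (fd \<alpha>) [0..<r])) = (A,B,C,D)"
  shows "quadratic_irrational \<alpha> \<and> galois_conj \<alpha> = of_int (D - A) / of_int C - \<alpha>
     \<and> galois_conj \<alpha> < 1 \<and> C \<ge> 1 \<and> ginv (A,B,C,D) \<and> orb \<alpha> r = \<alpha>
     \<and> of_int C * \<alpha>^2 + of_int (A - D) * \<alpha> + of_int (- B) = 0"
proof -
  have inv: "ginv (A,B,C,D)" using ginv_gm[of "rev (map (fd \<alpha>) [0..<r])"] g by (auto simp: vd_fd)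
  have C1: "C \<ge> 1" using gm_C_pos[OF _ _ g] r by (auto simp: vd_fd)
  have ret: "orb \<alpha> r = \<alpha>"
  proof (rule inj_digits)
    show "\<forall>i. lehner_digit (orb \<alpha> r) i = lehner_digit \<alpha> i"
      using per by (auto simp: lehner_digit_def orb_def funpow_add)
  qed (use orb_in[OF a] a in auto)
  have fw: "\<alpha> = (of_int D * \<alpha> + of_int B) / (of_int C * \<alpha> + of_int A)"
    using fwd[OF a, of 0 r A B C D] g ret by simp
  have CA: "of_int C * \<alpha> + of_int A > (1::real)"
  proof -
    have "of_int C * \<alpha> > of_int C * (1::real)" using C1 a by (intro mult_strict_left_mono) auto
    then show ?thesis using inv by (auto simp: ginv_def)
  qed
  have eq: "of_int C * \<alpha>^2 + of_int (A - D) * \<alpha> + of_int (- B) = 0"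
  proof -
    have "\<alpha> * (of_int C * \<alpha> + of_int A) = of_int D * \<alpha> + of_int B"
      using fw CA by (simp add: field_simps)
    then show ?thesis by (simp add: algebra_simps power2_eq_square)
  qed
  have Cne: "C \<noteq> 0" using C1 by simp
  have qi: "quadratic_irrational \<alpha>" unfolding quadratic_irrational_def using a(3) eq Cne by blast
  have gc: "galois_conj \<alpha> = of_int (D - A) / of_int C - \<alpha>"
    using conj_eq[OF a(3) Cne eq] by (simp add: minus_divide_left)
  define \<gamma> where "\<gamma> = galois_conj \<alpha>"
  have Cg: "of_int C * \<gamma> + of_int A = of_int D - of_int C * \<alpha>"
    using Cne by (simp add: \<gamma>_def gc field_simps)
  have prod: "(of_int C * \<alpha> + of_int A) * (of_int C * \<gamma> + of_int A) = of_int (A * D - B * C)"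
  proof -
    have e2: "of_int C * \<alpha>^2 = of_int (D - A) * \<alpha> + of_int B" using eq by (simp add: algebra_simps)
    have "(of_int C * \<alpha> + of_int A) * (of_int D - of_int C * \<alpha>)
        = of_int A * of_int D - of_int C * (of_int C * \<alpha>^2) + (of_int C * of_int D - of_int A * of_int C) * (\<alpha>::real)"
      by (simp add: algebra_simps power2_eq_square)
    also have "\<dots> = of_int A * of_int D - of_int C * (of_int (D - A) * \<alpha> + of_int B) + (of_int C * of_int D - of_int A * of_int C) * \<alpha>"
      by (simp only: e2)
    also have "\<dots> = of_int (A * D - B * C)" by (simp add: algebra_simps)
    finally show ?thesis using Cg by simp
  qed
  have "\<bar>(of_int C * \<alpha> + of_int A) * (of_int C * \<gamma> + of_int A)\<bar> = (1::real)"
  proof -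
    have h: "\<bar>A * D - B * C\<bar> = 1" using inv by (simp add: ginv_def)
    have "\<bar>(of_int (A * D - B * C) :: real)\<bar> = 1" by (metis of_int_abs of_int_1 h)
    then show ?thesis using prod by simp
  qed
  then have "(of_int C * \<alpha> + of_int A) * \<bar>of_int C * \<gamma> + of_int A\<bar> = (1::real)"
    using CA by (simp add: abs_mult)
  then have "\<bar>of_int C * \<gamma> + of_int A\<bar> = 1 / (of_int C * \<alpha> + of_int A)" using CA
    by (simp add: field_simps)
  also have "\<dots> < 1" using CA by simp
  finally have "\<bar>of_int C * \<gamma> + of_int A\<bar> < (1::real)" .
  then have "of_int C * \<gamma> < of_int C * (1::real)" using inv by (auto simp: ginv_def)
  then have "\<gamma> < 1" using C1 by simp
  then show ?thesis using qi gc C1 inv ret eq by (simp add: \<gamma>_def)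
qed



definition CC :: "(nat \<Rightarrow> int \<times> int) \<Rightarrow> nat \<Rightarrow> int" where
  "CC dd n = fst (snd (snd (gm (map dd [0..<n]))))"
definition DD :: "(nat \<Rightarrow> int \<times> int) \<Rightarrow> nat \<Rightarrow> int" where
  "DD dd n = snd (snd (snd (gm (map dd [0..<n]))))"

lemma CC_Suc: "CC dd (Suc n) = DD dd n"
  by (cases "gm (map dd [0..<n])") (simp add: CC_def DD_def gstep_def)
lemma DD_Suc: "DD dd (Suc n) = CC dd n * fst (dd n) + DD dd n * snd (dd n)"
  by (cases "gm (map dd [0..<n])") (simp add: CC_def DD_def gstep_def)

lemma CD_inv: assumes "\<forall>n. vd (dd n)" shows "0 \<le> CC dd n \<and> CC dd n \<le> DD dd n \<and> 1 \<le> DD dd n"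
proof -
  have "ginv (gm (map dd [0..<n]))" using assms by (intro ginv_gm) auto
  then show ?thesis by (cases "gm (map dd [0..<n])") (simp add: CC_def DD_def ginv_def)
qed

lemma DD_mono_Suc: assumes "\<forall>n. vd (dd n)" shows "DD dd n \<le> DD dd (Suc n)"
proof -
  have "dd n = (1,1) \<or> dd n = (-1,2)" using assms by (simp add: vd_def)
  then show ?thesis using CD_inv[OF assms, of n] by (auto simp: DD_Suc)
qed

lemma DD_mono: assumes "\<forall>n. vd (dd n)" "m \<le> n" shows "DD dd m \<le> DD dd n"
  using assms(2) by (induction n rule: dec_induct) (use DD_mono_Suc[OF assms(1)] order_trans in blast)+

lemma DD_inc: assumes "\<forall>n. vd (dd n)" "n \<ge> 1" "dd n = (1,1)" shows "DD dd n + 1 \<le> DD dd (Suc n)"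
proof -
  obtain m where n: "n = Suc m" using assms(2) by (cases n) auto
  have "CC dd n \<ge> 1" using CD_inv[OF assms(1), of m] by (simp add: n CC_Suc)
  then show ?thesis using assms(3) by (simp add: DD_Suc)
qed

lemma DD_grow:
  assumes "\<forall>n. vd (dd n)" "r > 0" "\<forall>k. dd (j + k * r) = (1,1)"
  shows "of_nat k + 1 \<le> DD dd (j + k * r + 1)"
proof (induction k)
  case 0 then show ?case using CD_inv[OF assms(1)] by simp
next
  case (Suc k)
  have "DD dd (j + k * r + 1) \<le> DD dd (j + Suc k * r)" using assms(2) by (intro DD_mono[OF assms(1)]) auto
  moreover have "DD dd (j + Suc k * r) + 1 \<le> DD dd (Suc (j + Suc k * r))"
    using assms(2) assms(3)[rule_format, of "Suc k"] by (intro DD_inc[OF assms(1)]) auto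
  ultimately show ?case using Suc by simp
qed



lemma G_est:
  assumes "\<forall>x\<in>set xs. vd x" "e > -1" "gm xs = (A,B,C,D)"
  shows "\<bar>G xs e - G xs 0\<bar> \<le> (\<bar>e\<bar> / min 1 (1 + e)) / of_int D"
proof -
  have inv: "ginv (A,B,C,D)" using ginv_gm[OF assms(1)] assms(3) by simp
  have C0: "0 \<le> C" and CD: "C \<le> D" and D1: "1 \<le> D" and det: "\<bar>A * D - B * C\<bar> = 1"
    using inv by (auto simp: ginv_def)
  have f1: "of_int C * e + of_int D > 0" and G1: "G xs e = (of_int A * e + of_int B) / (of_int C * e + of_int D)"
    using G_formula[OF assms] by auto
  have G0: "G xs 0 = of_int B / of_int D" using G_formula[OF assms(1) _ assms(3), of 0] by simp
  have Dp: "(of_int D :: real) \<ge> 1" using D1 by simp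
  have m0: "min 1 (1 + e) > 0" using assms(2) by simp
  have low: "of_int C * e + of_int D \<ge> min 1 (1 + e) * of_int D"
  proof (cases "e \<ge> 0")
    case True
    have "of_int C * e \<ge> 0" using C0 True by simp
    moreover have "min 1 (1 + e) * of_int D \<le> 1 * of_int D" using Dp by (intro mult_right_mono) auto
    ultimately show ?thesis by simp
  next
    case False
    have "of_int C * e \<ge> of_int D * e" using CD False by (intro mult_right_mono_neg) auto
    moreover have "min 1 (1 + e) * of_int D \<le> (1 + e) * of_int D" using Dp by (intro mult_right_mono) auto
    ultimately show ?thesis by (simp add: algebra_simps)
  qed
  have "G xs e - G xs 0 = ((of_int A * e + of_int B) * of_int D - of_int B * (of_int C * e + of_int D)) / ((of_int C * e + of_int D) * of_int D)"
    unfolding G1 G0 using f1 Dp by (intro diff_frac_eq) auto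
  also have "(of_int A * e + of_int B) * of_int D - of_int B * (of_int C * e + of_int D) = of_int (A * D - B * C) * e"
    by (simp add: algebra_simps)
  finally have "G xs e - G xs 0 = of_int (A * D - B * C) * e / ((of_int C * e + of_int D) * of_int D)" .
  then have "\<bar>G xs e - G xs 0\<bar> = \<bar>of_int (A * D - B * C) * e\<bar> / \<bar>(of_int C * e + of_int D) * of_int D\<bar>"
    by (simp only: abs_divide)
  also have "\<dots> = \<bar>e\<bar> / ((of_int C * e + of_int D) * of_int D)"
  proof -
    have detr: "\<bar>(of_int (A * D - B * C)::real)\<bar> = 1" by (metis of_int_abs of_int_1 det)
    have "\<bar>(of_int C * e + of_int D) * of_int D\<bar> = (of_int C * e + of_int D) * of_int D" using f1 Dp by simp
    then show ?thesis by (simp only: abs_mult detr mult_1)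
  qed
  also have "\<dots> \<le> \<bar>e\<bar> / ((min 1 (1 + e) * of_int D) * of_int D)"
    using low m0 Dp f1 by (intro divide_left_mono mult_right_mono mult_pos_pos) auto
  also have "\<dots> \<le> \<bar>e\<bar> / ((min 1 (1 + e) * 1) * of_int D)"
    using m0 Dp by (intro divide_left_mono mult_right_mono mult_left_mono mult_pos_pos) auto
  also have "\<dots> = (\<bar>e\<bar> / min 1 (1 + e)) / of_int D" by simp
  finally show ?thesis .
qed

lemma mod_facts:
  fixes n r :: nat
  assumes "r > 0"
  shows "(r - Suc n mod r) mod r = r - 1 - n mod r"
    and "n mod r = 0 \<or> (r - n mod r) mod r = Suc (r - 1 - n mod r)"
proof -
  have m: "n mod r < r" using assms by simp
  show "(r - Suc n mod r) mod r = r - 1 - n mod r"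
  proof (cases "Suc (n mod r) = r")
    case True
    then have "Suc n mod r = 0" by (simp add: mod_Suc)
    then show ?thesis using True by simp
  next
    case False
    then have "Suc n mod r = Suc (n mod r)" by (simp add: mod_Suc)
    then show ?thesis using m False by simp
  qed
  show "n mod r = 0 \<or> (r - n mod r) mod r = Suc (r - 1 - n mod r)"
  proof (cases "n mod r = 0")
    case False
    then have "r - n mod r < r" using m by simp
    then have "(r - n mod r) mod r = r - n mod r" by simp
    then show ?thesis using m False by simp
  qed simp
qed

lemma incr_orb:
  assumes a: "1 < \<alpha>" "\<alpha> < 2" "\<alpha> \<notin> \<rat>" and r: "r > 0"
    and all: "\<forall>j<r. lehner_digit \<alpha> j = (2,-1)"
  shows "orb \<alpha> r > \<alpha>"
proof -
  have st: "orb \<alpha> (Suc j) > orb \<alpha> j" if "j < r" for j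
  proof -
    have lt: "orb \<alpha> j < 3/2" using all that by (auto simp: lehner_digit_orb split: if_splits)
    have x1: "orb \<alpha> j > 1" using orb_in[OF a] by simp
    have "orb \<alpha> (Suc j) = 1 / (2 - orb \<alpha> j)" using lt by (simp add: orb_Suc lehner_map_def)
    moreover have "1 / (2 - orb \<alpha> j) > orb \<alpha> j"
    proof -
      have "(orb \<alpha> j - 1)^2 > 0" using x1 by simp
      moreover have "orb \<alpha> j * (2 - orb \<alpha> j) = 1 - (orb \<alpha> j - 1)^2" by (simp add: algebra_simps power2_eq_square)
      ultimately have "orb \<alpha> j * (2 - orb \<alpha> j) < 1" by linarith
      then show ?thesis using lt by (simp add: field_simps)
    qed
    ultimately show ?thesis by simp
  qed
  have mono: "m \<le> r \<Longrightarrow> orb \<alpha> m \<ge> \<alpha>" for m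
  proof (induction m)
    case 0 then show ?case by simp
  next
    case (Suc m) then show ?case using st[of m] by simp
  qed
  obtain m where rm: "r = Suc m" using r by (cases r) auto
  show ?thesis using st[of m] mono[of m] rm by simp
qed



lemma partB:
  assumes a: "1 < \<alpha>" "\<alpha> < 2" "\<alpha> \<notin> \<rat>" and r: "r > 0"
    and per: "\<forall>i. lehner_digit \<alpha> (i + r) = lehner_digit \<alpha> i"
  shows "farey_cf_has_value
      (\<lambda>i. (snd (lehner_digit \<alpha> (r - 1 - i mod r)), fst (lehner_digit \<alpha> (r - 1 - i mod r))))
      (- galois_conj \<alpha>)"
proof -
  obtain A B C D where g: "gm (rev (map (fd \<alpha>) [0..<r])) = (A,B,C,D)"
    by (cases "gm (rev (map (fd \<alpha>) [0..<r]))") auto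
  note PA = partA[OF a r per g]
  define \<gamma> where "\<gamma> = galois_conj \<alpha>"
  have \<gamma>1: "\<gamma> < 1" and gc: "\<gamma> = of_int (D - A) / of_int C - \<alpha>" and C1: "C \<ge> 1"
    and ret: "orb \<alpha> r = \<alpha>" and eq: "of_int C * \<alpha>^2 + of_int (A - D) * \<alpha> + of_int (- B) = 0"
    using PA by (auto simp: \<gamma>_def)
  have Cne: "(of_int C :: real) \<noteq> 0" using C1 by simp
  have Cg: "of_int C * \<gamma> = of_int (D - A) - of_int C * \<alpha>" using Cne by (simp add: gc field_simps)
  have \<gamma>root: "of_int C * \<gamma>^2 + of_int (A - D) * \<gamma> - of_int B = 0"
  proof -
    have "of_int C * \<gamma>^2 + of_int (A - D) * \<gamma> = \<gamma> * (of_int C * \<gamma> + of_int (A - D))"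
      by (simp add: algebra_simps power2_eq_square)
    also have "\<dots> = \<gamma> * (- of_int C * \<alpha>)"
    proof -
      have "of_int C * \<gamma> + of_int (A - D) = - of_int C * \<alpha>" using Cg by simp
      then show ?thesis by simp
    qed
    also have "\<dots> = - \<alpha> * (of_int C * \<gamma>)" by (simp add: algebra_simps)
    also have "\<dots> = - \<alpha> * (of_int (D - A) - of_int C * \<alpha>)" by (simp only: Cg)
    also have "\<dots> = of_int C * \<alpha>^2 + of_int (A - D) * \<alpha>" by (simp add: algebra_simps power2_eq_square)
    also have "\<dots> = of_int B" using eq by simp
    finally show ?thesis by simp
  qed
  define cs where "cs = rec_nat (-\<gamma>) (\<lambda>i c. kf (fd \<alpha> i) c)"
  have cs0: "cs 0 = -\<gamma>" and csS: "\<And>i. cs (Suc i) = kf (fd \<alpha> i) (cs i)" by (simp_all add: cs_def)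
  have csgt: "cs i > -1" for i
    by (induction i) (use \<gamma>1 in \<open>auto simp: cs0 csS intro: kf_gt vd_fd\<close>)
  have csG: "cs n = G (rev (map (fd \<alpha>) [0..<n])) (cs 0)" for n
    by (induction n) (auto simp: csS)
  have csr: "cs r = cs 0"
  proof -
    have F: "of_int C * cs 0 + of_int D > 0 \<and> G (rev (map (fd \<alpha>) [0..<r])) (cs 0) = (of_int A * cs 0 + of_int B) / (of_int C * cs 0 + of_int D)"
      using G_formula[OF _ csgt g] by (auto simp: vd_fd)
    have "of_int A * cs 0 + of_int B = cs 0 * (of_int C * cs 0 + of_int D)"
      using \<gamma>root by (simp add: cs0 algebra_simps power2_eq_square)
    then show ?thesis using F csG[of r] by simp
  qed
  define dd where "dd = (\<lambda>i. fd \<alpha> (r - 1 - i mod r))"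
  have goal_fun: "(\<lambda>i. (snd (lehner_digit \<alpha> (r - 1 - i mod r)), fst (lehner_digit \<alpha> (r - 1 - i mod r)))) = dd"
    by (simp add: dd_def fd_def)
  have vdd: "\<forall>n. vd (dd n)" by (simp add: dd_def vd_fd)
  define ix where "ix n = (r - n mod r) mod r" for n
  have ixlt: "ix n < r" for n using r by (simp add: ix_def)
  have rel: "cs 0 = G (map dd [0..<n]) (cs (ix n))" for n
  proof (induction n)
    case 0 then show ?case by (simp add: ix_def)
  next
    case (Suc n)
    define j where "j = r - 1 - n mod r"
    have i1: "ix (Suc n) = j" using mod_facts(1)[OF r, of n] by (simp add: ix_def j_def)
    have i2: "cs (ix n) = cs (Suc j)"
    proof (cases "n mod r = 0")
      case True
      then have "ix n = 0" "Suc j = r" using r by (auto simp: ix_def j_def)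
      then show ?thesis using csr by simp
    next
      case False
      then show ?thesis using mod_facts(2)[OF r, of n] by (simp add: ix_def j_def)
    qed
    have "G (map dd [0..<Suc n]) (cs (ix (Suc n))) = G (map dd [0..<n]) (kf (dd n) (cs j))"
      by (simp add: G_append i1)
    also have "kf (dd n) (cs j) = cs (Suc j)" by (simp add: csS dd_def j_def)
    finally show ?case using Suc i2 by simp
  qed
  obtain j where j: "j < r" "lehner_digit \<alpha> j = (1,1)"
  proof (rule ccontr)
    assume nt: "\<not> thesis"
    have "lehner_digit \<alpha> j = (2,-1)" if jr: "j < r" for j
    proof (rule ccontr)
      assume "lehner_digit \<alpha> j \<noteq> (2,-1)"
      then have "lehner_digit \<alpha> j = (1,1)" by (auto simp: lehner_digit_def split: if_splits)
      then show False using nt jr \<open>\<And>j. j < r \<Longrightarrow> lehner_digit \<alpha> j = (1,1) \<Longrightarrow> thesis\<close> by blast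
    qed
    then have "\<forall>j<r. lehner_digit \<alpha> j = (2,-1)" by blast
    then have "orb \<alpha> r > \<alpha>" using incr_orb[OF a r] by blast
    then show False using ret by simp
  qed
  define j' where "j' = r - 1 - j"
  have ddj: "\<forall>k. dd (j' + k * r) = (1,1)"
  proof
    fix k
    have "j' < r" using j r by (simp add: j'_def)
    then have "(j' + k * r) mod r = j'" by simp
    then have "r - 1 - (j' + k * r) mod r = j" using j by (simp add: j'_def)
    then show "dd (j' + k * r) = (1,1)" using j by (simp add: dd_def fd_def)
  qed
  have grow: "of_nat k + 1 \<le> DD dd (j' + k * r + 1)" for k
    using DD_grow[OF vdd r ddj] by simp
  define w where "w e = \<bar>e\<bar> / min 1 (1 + e)" for e :: real
  define K where "K = (\<Sum>i<r. w (cs i))"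
  have w0: "w (cs i) \<ge> 0" for i using csgt[of i] by (simp add: w_def)
  have est: "\<bar>G (map dd [0..<n]) (cs (ix n)) - G (map dd [0..<n]) 0\<bar> \<le> K / of_int (DD dd n)" for n
  proof -
    obtain A' B' C' D' where gn: "gm (map dd [0..<n]) = (A',B',C',D')"
      by (cases "gm (map dd [0..<n])") auto
    have DDn: "DD dd n = D'" by (simp add: DD_def gn)
    have D1: "DD dd n \<ge> 1" using CD_inv[OF vdd] by simp
    have "\<bar>G (map dd [0..<n]) (cs (ix n)) - G (map dd [0..<n]) 0\<bar> \<le> w (cs (ix n)) / of_int D'"
      using G_est[OF _ csgt gn] vdd by (auto simp: w_def)
    also have "\<dots> \<le> K / of_int D'"
    proof (rule divide_right_mono)
      show "w (cs (ix n)) \<le> K" unfolding K_def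
        using ixlt[of n] w0 by (intro member_le_sum) auto
    qed (use D1 DDn in simp)
    finally show ?thesis by (simp add: DDn)
  qed
  show ?thesis
    unfolding farey_cf_has_value_def goal_fun
  proof (rule LIMSEQ_I)
    fix \<epsilon> :: real assume e: "\<epsilon> > 0"
    obtain k :: nat where k: "K / \<epsilon> < of_nat k" using reals_Archimedean2 by blast
    show "\<exists>no. \<forall>n\<ge>no. norm (farey_cf_fin (map dd [0..<n]) - - galois_conj \<alpha>) < \<epsilon>"
    proof (intro exI allI impI)
      fix n assume n: "j' + k * r + 1 \<le> n"
      have Dn: "of_nat k + 1 \<le> DD dd n" using grow[of k] DD_mono[OF vdd n] by simp
      have Dpos: "(of_int (DD dd n) :: real) > 0" using Dn by simp
      have "K < \<epsilon> * of_nat k" using k e by (simp add: field_simps)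
      also have "\<dots> \<le> \<epsilon> * of_int (DD dd n)" using e Dn by (intro mult_left_mono) auto
      finally have KD: "K / of_int (DD dd n) < \<epsilon>" using Dpos by (simp add: field_simps)
      have "norm (farey_cf_fin (map dd [0..<n]) - - galois_conj \<alpha>) = \<bar>G (map dd [0..<n]) (cs (ix n)) - G (map dd [0..<n]) 0\<bar>"
        using rel[of n] by (simp add: farey_G cs0 \<gamma>_def abs_minus_commute)
      also have "\<dots> < \<epsilon>" using est[of n] KD by linarith
      finally show "norm (farey_cf_fin (map dd [0..<n]) - - galois_conj \<alpha>) < \<epsilon>" .
    qed
  qed
qed



lemma irr_conj:
  fixes a b :: int and x :: real
  assumes "x \<notin> \<rat>" shows "- of_int b / of_int a - x \<notin> \<rat>"
proof
  assume h: "- of_int b / of_int a - x \<in> \<rat>"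
  have q: "(- of_int b / of_int a :: real) \<in> \<rat>" by simp
  have "(- of_int b / of_int a) - (- of_int b / of_int a - x) \<in> \<rat>"
    using Rats_diff[OF q h] .
  then show False using assms by simp
qed

lemma qstep:
  fixes a b c a' e :: int
  assumes x: "x \<notin> \<rat>" and a0: "a \<noteq> 0" and root: "of_int a * x^2 + of_int b * x + of_int c = 0"
    and e: "e = 1 \<or> e = -1" and y: "y = of_int e / (x - of_int a')" and yq: "y \<notin> \<rat>"
  shows "\<exists>a1 b1 c1 :: int. a1 \<noteq> 0 \<and> of_int a1 * y^2 + of_int b1 * y + of_int c1 = 0
      \<and> b1^2 - 4 * a1 * c1 = b^2 - 4 * a * c"
    and "galois_conj y = of_int e / (galois_conj x - of_int a')"
proof -
  define a1 where "a1 = a * a'^2 + b * a' + c"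
  define b1 where "b1 = e * (2 * a * a' + b)"
  have xa: "x - of_int a' \<noteq> 0"
  proof
    assume "x - of_int a' = 0" then have "x = of_int a'" by simp
    then show False using x by simp
  qed
  have e2: "(of_int e :: real)^2 = 1" using e by auto
  have ynz: "y \<noteq> 0" using y e xa by auto
  have xy: "x = of_int a' + of_int e / y" using y xa e ynz by (auto simp: field_simps)
  have rooty: "of_int a1 * y^2 + of_int b1 * y + of_int a = 0"
  proof -
    have "of_int a1 * y^2 + of_int b1 * y + of_int a * (of_int e)^2 = y^2 * (of_int a * x^2 + of_int b * x + of_int c)"
      unfolding xy a1_def b1_def using ynz by (simp add: field_simps power2_eq_square)
    then show ?thesis using root e2 by simp
  qed
  have a1nz: "a1 \<noteq> 0"
  proof
    assume "a1 = 0"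
    then have lin: "of_int b1 * y + of_int a = 0" using rooty by simp
    show False
    proof (cases "b1 = 0")
      case True then show False using lin a0 by simp
    next
      case False
      then have "y = - of_int a / of_int b1" using lin by (simp add: field_simps)
      then show False using yq by simp
    qed
  qed
  show "\<exists>a1 b1 c1 :: int. a1 \<noteq> 0 \<and> of_int a1 * y^2 + of_int b1 * y + of_int c1 = 0
      \<and> b1^2 - 4 * a1 * c1 = b^2 - 4 * a * c"
  proof (intro exI conjI)
    show "a1 \<noteq> 0" by (rule a1nz)
    show "of_int a1 * y^2 + of_int b1 * y + of_int a = 0" by (rule rooty)
    have "e^2 = 1" using e by auto
    then show "b1^2 - 4 * a1 * a = b^2 - 4 * a * c"
      unfolding a1_def b1_def by (simp add: algebra_simps power2_eq_square)
  qed
  define z where "z = - of_int b / of_int a - x"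
  have gx: "galois_conj x = z" using conj_eq[OF x a0 root] by (simp add: z_def)
  have gy: "galois_conj y = - of_int b1 / of_int a1 - y" using conj_eq[OF yq a1nz rooty] .
  have zq: "z \<notin> \<rat>" using irr_conj[OF x] by (simp add: z_def)
  have za: "z - of_int a' \<noteq> 0"
  proof
    assume "z - of_int a' = 0" then have "z = of_int a'" by simp
    then show False using zq by simp
  qed
  have bsum: "of_int b = - of_int a * (x + z)" using a0 by (simp add: z_def field_simps)
  have cprod: "of_int c = of_int a * x * z"
  proof -
    have c1: "of_int c = - of_int a * x^2 - of_int b * x" using root by (simp add: algebra_simps)
    have c2: "of_int a * x * z = - of_int b * x - of_int a * x^2" using a0 by (simp add: z_def field_simps power2_eq_square)
    show ?thesis using c1 c2 by simp
  qed
  define u where "u = of_int a' - x"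
  define v where "v = of_int a' - z"
  have u0: "u \<noteq> 0" using xa by (simp add: u_def)
  have v0: "v \<noteq> 0" using za by (simp add: v_def)
  have A1: "(of_int a1 :: real) = of_int a * u * v"
  proof -
    have "(of_int a1 :: real) = of_int a * of_int a'^2 + of_int b * of_int a' + of_int c" by (simp add: a1_def)
    also have "\<dots> = of_int a * of_int a'^2 + (- of_int a * (x + z)) * of_int a' + of_int a * x * z"
      by (simp only: bsum cprod)
    also have "\<dots> = of_int a * u * v" by (simp add: u_def v_def algebra_simps power2_eq_square)
    finally show ?thesis .
  qed
  have B1: "(of_int b1 :: real) = of_int e * of_int a * (u + v)"
  proof -
    have "(of_int b1 :: real) = of_int e * (2 * of_int a * of_int a' + of_int b)" by (simp add: b1_def)
    also have "\<dots> = of_int e * (2 * of_int a * of_int a' + (- of_int a * (x + z)))" by (simp only: bsum)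
    also have "\<dots> = of_int e * of_int a * (u + v)" by (simp add: u_def v_def algebra_simps)
    finally show ?thesis .
  qed
  have yu: "y = - of_int e / u" using y by (simp add: u_def minus_divide_right)
  have "- of_int b1 / of_int a1 - y = - of_int e * of_int a * (u + v) / (of_int a * u * v) + of_int e / u"
    by (simp add: A1 B1 yu)
  also have "\<dots> = - of_int e / v" using a0 u0 v0 by (simp add: field_simps)
  also have "\<dots> = of_int e / (z - of_int a')" by (simp add: v_def minus_divide_right)
  finally show "galois_conj y = of_int e / (galois_conj x - of_int a')" using gy gx by simp
qed



definition red :: "real \<Rightarrow> bool" where
  "red x \<longleftrightarrow> 1 < x \<and> x < 2 \<and> x \<notin> \<rat> \<and> galois_conj x < 1"

definition hasdisc :: "real \<Rightarrow> int \<Rightarrow> bool" where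
  "hasdisc x \<Delta> \<longleftrightarrow> (\<exists>a b c :: int. a \<noteq> 0 \<and> of_int a * x^2 + of_int b * x + of_int c = 0 \<and> b^2 - 4 * a * c = \<Delta>)"

lemma Lstep:
  assumes r: "red x" and h: "hasdisc x \<Delta>"
  shows "red (lehner_map x) \<and> hasdisc (lehner_map x) \<Delta> \<and>
     galois_conj (lehner_map x) = (if x < 3/2 then 1 / (2 - galois_conj x) else 1 / (galois_conj x - 1))"
proof -
  obtain a b c :: int where abc: "a \<noteq> 0" "of_int a * x^2 + of_int b * x + of_int c = 0" "b^2 - 4 * a * c = \<Delta>"
    using h by (auto simp: hasdisc_def)
  have x: "1 < x" "x < 2" "x \<notin> \<rat>" "galois_conj x < 1" using r by (auto simp: red_def)
  have Li: "1 < lehner_map x \<and> lehner_map x < 2 \<and> lehner_map x \<notin> \<rat>" using L_in x by blast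
  define a' where "a' = fst (if x < 3/2 then (2::int,-1::int) else (1,1))"
  define e where "e = snd (if x < 3/2 then (2::int,-1::int) else (1,1))"
  have e: "e = 1 \<or> e = -1" by (simp add: e_def)
  have Ly: "lehner_map x = of_int e / (x - of_int a')" using L_eq[of x] by (simp add: a'_def e_def)
  note Q = qstep[OF x(3) abc(1,2) e Ly] Li
  have hd: "hasdisc (lehner_map x) \<Delta>" using Q abc(3) by (auto simp: hasdisc_def)
  have gc: "galois_conj (lehner_map x) = (if x < 3/2 then 1 / (2 - galois_conj x) else 1 / (galois_conj x - 1))"
  proof -
    have aux: "-(1 / (t - 2)) = 1 / (2 - t)" for t :: real by (metis minus_diff_eq minus_divide_right)
    show ?thesis using Q(2)[OF conjunct2[OF conjunct2[OF Li]]] by (auto simp: a'_def e_def aux)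
  qed
  have "galois_conj (lehner_map x) < 1"
  proof (cases "x < 3/2")
    case True
    have "1 / (2 - galois_conj x) < 1" using x(4) by (simp add: field_simps)
    then show ?thesis using gc True by simp
  next
    case False
    have "1 / (galois_conj x - 1) < 0" using x(4) by (simp add: field_simps)
    then show ?thesis using gc False by simp
  qed
  then show ?thesis using Li hd gc by (simp add: red_def)
qed

lemma pred_uniq:
  assumes "red x" "hasdisc x \<Delta>1" "red y" "hasdisc y \<Delta>2" "lehner_map x = lehner_map y"
  shows "x = y"
proof -
  have x: "1 < x" "x < 2" "galois_conj x < 1" and y: "1 < y" "y < 2" "galois_conj y < 1"
    using assms by (auto simp: red_def)
  note gx = conjunct2[OF conjunct2[OF Lstep[OF assms(1,2)]]]
  note gy = conjunct2[OF conjunct2[OF Lstep[OF assms(3,4)]]]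
  have p1: "1 / (2 - galois_conj x) > 0" using x by simp
  have p2: "1 / (2 - galois_conj y) > 0" using y by simp
  have n1: "1 / (galois_conj x - 1) < 0" using x by simp
  have n2: "1 / (galois_conj y - 1) < 0" using y by simp
  show ?thesis
  proof (cases "x < 3/2"; cases "y < 3/2")
    assume "x < 3/2" "y < 3/2"
    then have "1 / (2 - x) = 1 / (2 - y)" using assms(5) by (simp add: lehner_map_def)
    then show ?thesis using x y by (simp add: field_simps)
  next
    assume "x < 3/2" "\<not> y < 3/2"
    then show ?thesis using assms(5) gx gy p1 n2 by simp
  next
    assume "\<not> x < 3/2" "y < 3/2"
    then show ?thesis using assms(5) gx gy p2 n1 by simp
  next
    assume "\<not> x < 3/2" "\<not> y < 3/2"
    then have "1 / (x - 1) = 1 / (y - 1)" using assms(5) by (simp add: lehner_map_def)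
    then show ?thesis using x y by (simp add: field_simps)
  qed
qed

lemma int_abs_le_sq: "\<bar>n::int\<bar> \<le> n^2"
proof (cases "n = 0")
  case False
  then have "\<bar>n\<bar> * 1 \<le> \<bar>n\<bar> * \<bar>n\<bar>" by (intro mult_left_mono) auto
  then show ?thesis by (simp add: power2_eq_square abs_mult[symmetric])
qed simp

lemma bound:
  fixes a b c \<Delta> :: int
  assumes r: "red x" and a0: "a \<noteq> 0" and root: "of_int a * x^2 + of_int b * x + of_int c = 0"
    and d: "b^2 - 4 * a * c = \<Delta>"
  shows "\<bar>a\<bar> \<le> 6 * \<Delta> \<and> \<bar>b\<bar> \<le> 6 * \<Delta> \<and> \<bar>c\<bar> \<le> 6 * \<Delta>"
proof -
  have x: "1 < x" "x < 2" "x \<notin> \<rat>" "galois_conj x < 1" using r by (auto simp: red_def)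
  define z where "z = galois_conj x"
  have zd: "z = - of_int b / of_int a - x" using conj_eq[OF x(3) a0 root] by (simp add: z_def)
  have bsum: "of_int b = - of_int a * (x + z)" using a0 by (simp add: zd field_simps)
  have cprod: "of_int c = of_int a * x * z"
  proof -
    have c1: "of_int c = - of_int a * x^2 - of_int b * x" using root by (simp add: algebra_simps)
    have c2: "of_int a * x * z = - of_int b * x - of_int a * x^2" using a0 by (simp add: zd field_simps power2_eq_square)
    show ?thesis using c1 c2 by simp
  qed
  define u where "u = x - 1"
  define w where "w = 1 - z"
  have u0: "u > 0" using x by (simp add: u_def)
  have w0: "w > 0" using x by (simp add: w_def z_def)
  define P where "P = a + b + c"
  have Pr: "(of_int P :: real) = - of_int a * u * w"
  proof -
    have "(of_int P :: real) = of_int a + (- of_int a * (x + z)) + of_int a * x * z"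
      by (simp add: P_def bsum cprod)
    also have "\<dots> = - of_int a * u * w" by (simp add: u_def w_def algebra_simps)
    finally show ?thesis .
  qed
  have Dr: "(of_int \<Delta> :: real) = (of_int a)^2 * (u + w)^2"
  proof -
    have "(of_int \<Delta> :: real) = (of_int b)^2 - 4 * of_int a * of_int c" using d by (simp flip: d)
    also have "\<dots> = (- of_int a * (x + z))^2 - 4 * of_int a * (of_int a * x * z)" by (simp only: bsum cprod)
    also have "\<dots> = (of_int a)^2 * (u + w)^2" by (simp add: u_def w_def algebra_simps power2_eq_square)
    finally show ?thesis .
  qed
  have P0: "P \<noteq> 0"
  proof
    assume "P = 0" then have "(of_int a :: real) * u * w = 0" using Pr by simp
    then show False using a0 u0 w0 by simp
  qed
  have key: "4 * \<bar>a\<bar> * \<bar>P\<bar> \<le> \<Delta>"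
  proof -
    have "(of_int (4 * \<bar>a\<bar> * \<bar>P\<bar>) :: real) = 4 * (of_int a)^2 * (u * w)"
      using u0 w0 by (simp add: Pr abs_mult power2_eq_square)
    also have "\<dots> \<le> (of_int a)^2 * (u + w)^2"
    proof -
      have "4 * (u * w) \<le> (u + w)^2" using sum_squares_ge_zero[of "u - w" 0]
        by (simp add: algebra_simps power2_eq_square)
      from mult_left_mono[OF this, of "(of_int a)^2"] show ?thesis by (simp add: algebra_simps)
    qed
    also have "\<dots> = of_int \<Delta>" using Dr by simp
    finally show ?thesis by linarith
  qed
  have P1: "\<bar>P\<bar> \<ge> 1" using P0 by simp
  have aP: "\<bar>a\<bar> \<le> \<bar>a\<bar> * \<bar>P\<bar>" using P1 by (simp add: mult_le_cancel_left1)
  have a1: "\<bar>a\<bar> \<ge> 1" using a0 by linarith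
  have Pa: "\<bar>P\<bar> \<le> \<bar>a\<bar> * \<bar>P\<bar>" using a1 by (simp add: mult_le_cancel_right1)
  have aD: "\<bar>a\<bar> \<le> \<Delta>" using key aP by simp
  have PD: "\<bar>P\<bar> \<le> \<Delta>" using key Pa by simp
  have sq: "(b + 2 * a)^2 = \<Delta> + 4 * a * P"
    using d by (simp add: P_def algebra_simps power2_eq_square flip: d)
  have "4 * a * P \<le> 4 * \<bar>a\<bar> * \<bar>P\<bar>" by (simp add: abs_mult[symmetric] mult.assoc)
  then have "(b + 2 * a)^2 \<le> 2 * \<Delta>" using sq key by simp
  then have bb: "\<bar>b + 2 * a\<bar> \<le> 2 * \<Delta>" using int_abs_le_sq[of "b + 2 * a"] by simp
  have bD: "\<bar>b\<bar> \<le> 4 * \<Delta>" using bb aD by simp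
  have cD: "\<bar>c\<bar> \<le> 6 * \<Delta>" using bD aD PD by (simp add: P_def)
  have D0: "\<Delta> \<ge> 0" using aD abs_ge_zero[of a] by linarith
  show ?thesis using aD bD cD D0 by (intro conjI; linarith)
qed

lemma finite_red: "finite {x. red x \<and> hasdisc x \<Delta>}"
proof -
  define M where "M = 6 * \<Delta>"
  define box where "box = {-M..M} \<times> {-M..M} \<times> {-M..M}"
  define rs where "rs p = {x :: real. fst p \<noteq> 0 \<and> of_int (fst p) * x^2 + of_int (fst (snd p)) * x + of_int (snd (snd p)) = 0}" for p :: "int \<times> int \<times> int"
  have fr: "finite (rs p)" for p
  proof (cases "fst p = 0")
    case True then show ?thesis by (simp add: rs_def)
  next
    case False
    define a where "a = (of_int (fst p) :: real)"
    define b where "b = (of_int (fst (snd p)) :: real)"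
    define c where "c = (of_int (snd (snd p)) :: real)"
    have a0: "a \<noteq> 0" using False by (simp add: a_def)
    have "rs p \<subseteq> {(-b + sqrt (discrim a b c)) / (2 * a), (-b - sqrt (discrim a b c)) / (2 * a)}"
      unfolding rs_def using discriminant_iff[OF a0] by (auto simp: a_def b_def c_def)
    then show ?thesis by (rule finite_subset) simp
  qed
  have "{x. red x \<and> hasdisc x \<Delta>} \<subseteq> (\<Union>p\<in>box. rs p)"
  proof
    fix x assume "x \<in> {x. red x \<and> hasdisc x \<Delta>}"
    then obtain a b c :: int where h: "red x" "a \<noteq> 0" "of_int a * x^2 + of_int b * x + of_int c = 0" "b^2 - 4 * a * c = \<Delta>"
      by (auto simp: hasdisc_def)
    have "\<bar>a\<bar> \<le> M \<and> \<bar>b\<bar> \<le> M \<and> \<bar>c\<bar> \<le> M" using bound[OF h] by (simp add: M_def)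
    then have "(a,b,c) \<in> box" by (auto simp: box_def abs_le_iff)
    moreover have "x \<in> rs (a,b,c)" using h by (simp add: rs_def)
    ultimately show "x \<in> (\<Union>p\<in>box. rs p)" by blast
  qed
  moreover have "finite (\<Union>p\<in>box. rs p)" using fr by (simp add: box_def)
  ultimately show ?thesis by (rule finite_subset)
qed

lemma partC:
  assumes a: "1 < \<alpha>" "\<alpha> < 2" "\<alpha> \<notin> \<rat>" and q: "quadratic_irrational \<alpha>" and g: "galois_conj \<alpha> < 1"
  shows "lehner_purely_periodic \<alpha>"
proof -
  obtain a b c :: int where abc: "a \<noteq> 0" "of_int a * \<alpha>^2 + of_int b * \<alpha> + of_int c = 0"
    using q by (auto simp: quadratic_irrational_def)
  define \<Delta> where "\<Delta> = b^2 - 4 * a * c"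
  have inv: "red (orb \<alpha> n) \<and> hasdisc (orb \<alpha> n) \<Delta>" for n
  proof (induction n)
    case 0 then show ?case using a g abc by (auto simp: red_def hasdisc_def \<Delta>_def)
  next
    case (Suc n) then show ?case using Lstep[of "orb \<alpha> n" \<Delta>] by (simp add: orb_Suc)
  qed
  have "range (orb \<alpha>) \<subseteq> {x. red x \<and> hasdisc x \<Delta>}"
  proof
    fix y assume "y \<in> range (orb \<alpha>)"
    then obtain n where "y = orb \<alpha> n" by blast
    then show "y \<in> {x. red x \<and> hasdisc x \<Delta>}" using inv[of n] by simp
  qed
  then have "finite (range (orb \<alpha>))" using finite_red by (rule finite_subset)
  then have "\<not> inj (orb \<alpha>)" using finite_imageD infinite_UNIV_nat by blast
  then obtain m n where mn: "m \<noteq> n" "orb \<alpha> m = orb \<alpha> n" by (auto simp: inj_def)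
  obtain m p where mp: "p > 0" "orb \<alpha> (m + p) = orb \<alpha> m"
  proof (cases "m < n")
    case True then show ?thesis using that[of "n - m" m] mn by simp
  next
    case False then show ?thesis using that[of "m - n" n] mn by simp
  qed
  have bk: "orb \<alpha> (k + p) = orb \<alpha> k \<Longrightarrow> orb \<alpha> p = \<alpha>" for k
  proof (induction k)
    case 0 then show ?case by simp
  next
    case (Suc k)
    have "lehner_map (orb \<alpha> (k + p)) = lehner_map (orb \<alpha> k)" using Suc.prems by (simp add: orb_Suc)
    then have "orb \<alpha> (k + p) = orb \<alpha> k"
      by (rule pred_uniq[OF conjunct1[OF inv[of "k+p"]] conjunct2[OF inv[of "k+p"]] conjunct1[OF inv[of k]] conjunct2[OF inv[of k]]])
    then show ?case by (rule Suc.IH)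
  qed
  have ret: "orb \<alpha> p = \<alpha>" using bk mp(2) by blast
  have "\<forall>i. lehner_digit \<alpha> (i + p) = lehner_digit \<alpha> i"
    using ret by (simp add: lehner_digit_def orb_def funpow_add)
  then show ?thesis using mp(1) by (auto simp: lehner_purely_periodic_def)
qed


theorem proposition6p2:
  fixes \<alpha> :: real
  assumes "1 < \<alpha>" "\<alpha> < 2" "\<alpha> \<notin> \<rat>"
  shows "(lehner_purely_periodic \<alpha> \<longleftrightarrow>
            quadratic_irrational \<alpha> \<and> galois_conj \<alpha> < 1)
       \<and> (\<forall>r::nat. r > 0 \<longrightarrow> (\<forall>i. lehner_digit \<alpha> (i + r) = lehner_digit \<alpha> i) \<longrightarrow>
            farey_cf_has_value
              (\<lambda>i. (snd (lehner_digit \<alpha> (r - 1 - i mod r)), fst (lehner_digit \<alpha> (r - 1 - i mod r))))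
              (- galois_conj \<alpha>))"
proof (rule conjI)
  show "lehner_purely_periodic \<alpha> \<longleftrightarrow> quadratic_irrational \<alpha> \<and> galois_conj \<alpha> < 1"
  proof
    assume "lehner_purely_periodic \<alpha>"
    then obtain r where r: "r > 0" "\<forall>i. lehner_digit \<alpha> (i + r) = lehner_digit \<alpha> i"
      by (auto simp: lehner_purely_periodic_def)
    obtain A B C D where g: "gm (rev (map (fd \<alpha>) [0..<r])) = (A,B,C,D)"
      by (cases "gm (rev (map (fd \<alpha>) [0..<r]))") auto
    show "quadratic_irrational \<alpha> \<and> galois_conj \<alpha> < 1"
      using partA[OF assms r g] by simp
  next
    assume "quadratic_irrational \<alpha> \<and> galois_conj \<alpha> < 1"
    then show "lehner_purely_periodic \<alpha>" using partC[OF assms] by blast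
  qed
next
  show "\<forall>r::nat. r > 0 \<longrightarrow> (\<forall>i. lehner_digit \<alpha> (i + r) = lehner_digit \<alpha> i) \<longrightarrow>
            farey_cf_has_value
              (\<lambda>i. (snd (lehner_digit \<alpha> (r - 1 - i mod r)), fst (lehner_digit \<alpha> (r - 1 - i mod r))))
              (- galois_conj \<alpha>)"
    using partB[OF assms] by blast
qed

end
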